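(* For any integer $n\geq 2$ and positive numbers $V, L, \epsilon$, there is a universal constant $C>0$ such that $$\log\mathcal{N}(\mathcal{T}_{n,n,V,L},\epsilon) \leq C\log n\,\log\Big(1 + \frac{2Ln}{\epsilon}\Big)\max\Big\{\frac{V^2\log n}{\epsilon^2},1\Big\}.$$
   Context: $\mathcal{T}_{m,n,V,L} = \{\theta\in\mathbb{R}^{m\times n}: \mathrm{TV}(\theta)\le V,\ \|\theta\|_\infty\le L\}$, where $\mathrm{TV}(\theta)$ is the unnormalized total variation, i.e. the sum of $|\theta_u-\theta_v|$ over all pairs $u,v$ of horizontally or vertically adjacent entries, and $\|\theta\|_\infty$ is the maximum absolute entry. $\mathcal{N}(A,\epsilon)$ is the minimal number of Euclidean (Frobenius) balls of radius $\epsilon$ needed to cover $A$. *)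

theory Defs
  imports Complex_Main
begin

text \<open>An m x n real matrix is represented as a function on index pairs (i,j),
  i < m, j < n (0-based), which is zero outside the index range.\<close>

definition mat_space :: "nat \<Rightarrow> nat \<Rightarrow> (nat \<times> nat \<Rightarrow> real) set" where
  "mat_space m n = {\<theta>. \<forall>i j. \<not> (i < m \<and> j < n) \<longrightarrow> \<theta> (i, j) = 0}"

definition TV :: "nat \<Rightarrow> nat \<Rightarrow> (nat \<times> nat \<Rightarrow> real) \<Rightarrow> real" where
  "TV m n \<theta> =
     (\<Sum>i<m. \<Sum>j<n - 1. \<bar>\<theta> (i, Suc j) - \<theta> (i, j)\<bar>)
   + (\<Sum>i<m - 1. \<Sum>j<n. \<bar>\<theta> (Suc i, j) - \<theta> (i, j)\<bar>)"

definition sup_norm :: "nat \<Rightarrow> nat \<Rightarrow> (nat \<times> nat \<Rightarrow> real) \<Rightarrow> real" where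
  "sup_norm m n \<theta> = Max ({\<bar>\<theta> (i, j)\<bar> | i j. i < m \<and> j < n} \<union> {0})"

definition frob_dist :: "nat \<Rightarrow> nat \<Rightarrow> (nat \<times> nat \<Rightarrow> real) \<Rightarrow> (nat \<times> nat \<Rightarrow> real) \<Rightarrow> real" where
  "frob_dist m n a b = sqrt (\<Sum>i<m. \<Sum>j<n. (a (i, j) - b (i, j))\<^sup>2)"

definition TV_class :: "nat \<Rightarrow> nat \<Rightarrow> real \<Rightarrow> real \<Rightarrow> (nat \<times> nat \<Rightarrow> real) set" where
  "TV_class m n V L = {\<theta> \<in> mat_space m n. TV m n \<theta> \<le> V \<and> sup_norm m n \<theta> \<le> L}"

definition covering_number ::
  "nat \<Rightarrow> nat \<Rightarrow> (nat \<times> nat \<Rightarrow> real) set \<Rightarrow> real \<Rightarrow> nat" where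
  "covering_number m n A eps =
     (LEAST k. \<exists>K. finite K \<and> card K = k \<and> K \<subseteq> mat_space m n \<and>
                   (\<forall>\<theta>\<in>A. \<exists>c\<in>K. frob_dist m n \<theta> c \<le> eps))"

end

theory Submission
  imports Defs
begin


type_synonym rect = "nat \<times> nat \<times> nat \<times> nat"
type_synonym mat = "nat \<times> nat \<Rightarrow> real"

fun cells :: "rect \<Rightarrow> (nat \<times> nat) set" where
  "cells (a,b,c,d) = {a..<b} \<times> {c..<d}"
fun Hs :: "rect \<Rightarrow> (nat \<times> nat) set" where
  "Hs (a,b,c,d) = {a..<b} \<times> {c..<d-1}"
fun Vs :: "rect \<Rightarrow> (nat \<times> nat) set" where
  "Vs (a,b,c,d) = {a..<b-1} \<times> {c..<d}"
definition hdf :: "mat \<Rightarrow> nat \<times> nat \<Rightarrow> real" where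
  "hdf \<theta> p = \<bar>\<theta> (fst p, Suc (snd p)) - \<theta> p\<bar>"
definition vdf :: "mat \<Rightarrow> nat \<times> nat \<Rightarrow> real" where
  "vdf \<theta> p = \<bar>\<theta> (Suc (fst p), snd p) - \<theta> p\<bar>"
definition TVr :: "mat \<Rightarrow> rect \<Rightarrow> real" where
  "TVr \<theta> R = sum (hdf \<theta>) (Hs R) + sum (vdf \<theta>) (Vs R)"

fun q1 :: "rect \<Rightarrow> rect" where "q1 (a,b,c,d) = (a, (a+b) div 2, c, (c+d) div 2)"
fun q2 :: "rect \<Rightarrow> rect" where "q2 (a,b,c,d) = (a, (a+b) div 2, (c+d) div 2, d)"
fun q3 :: "rect \<Rightarrow> rect" where "q3 (a,b,c,d) = ((a+b) div 2, b, c, (c+d) div 2)"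
fun q4 :: "rect \<Rightarrow> rect" where "q4 (a,b,c,d) = ((a+b) div 2, b, (c+d) div 2, d)"

lemma hdf_nn: "hdf \<theta> p \<ge> 0" and vdf_nn: "vdf \<theta> p \<ge> 0"
  by (auto simp: hdf_def vdf_def)

lemma TVr_nn: "TVr \<theta> R \<ge> 0"
  unfolding TVr_def by (intro add_nonneg_nonneg sum_nonneg) (auto simp: hdf_nn vdf_nn)

lemma finite_cells[simp]: "finite (cells R)" and finite_Hs[simp]: "finite (Hs R)"
  and finite_Vs[simp]: "finite (Vs R)"
  by (cases R; auto)+

lemma sum4_le:
  fixes f :: "'a \<Rightarrow> real"
  assumes "finite B" "A1 \<subseteq> B" "A2 \<subseteq> B" "A3 \<subseteq> B" "A4 \<subseteq> B"
    "A1 \<inter> A2 = {}" "A1 \<inter> A3 = {}" "A1 \<inter> A4 = {}" "A2 \<inter> A3 = {}" "A2 \<inter> A4 = {}" "A3 \<inter> A4 = {}"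
    "\<And>x. f x \<ge> 0"
  shows "sum f A1 + sum f A2 + sum f A3 + sum f A4 \<le> sum f B"
proof -
  have fin: "finite A1" "finite A2" "finite A3" "finite A4" using assms finite_subset by metis+
  have "sum f (A1 \<union> A2 \<union> A3 \<union> A4) = sum f A1 + sum f A2 + sum f A3 + sum f A4"
    using fin assms(6-11) by (simp add: sum.union_disjoint Int_Un_distrib Int_Un_distrib2)
  moreover have "sum f (A1 \<union> A2 \<union> A3 \<union> A4) \<le> sum f B"
    using assms by (intro sum_mono2) auto
  ultimately show ?thesis by simp
qed

lemma sum4_eq:
  fixes f :: "'a \<Rightarrow> real"
  assumes "finite B" "B = A1 \<union> A2 \<union> A3 \<union> A4"
    "A1 \<inter> A2 = {}" "A1 \<inter> A3 = {}" "A1 \<inter> A4 = {}" "A2 \<inter> A3 = {}" "A2 \<inter> A4 = {}" "A3 \<inter> A4 = {}"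
  shows "sum f B = sum f A1 + sum f A2 + sum f A3 + sum f A4"
proof -
  have fin: "finite A1" "finite A2" "finite A3" "finite A4" using assms by auto
  show ?thesis
    using fin assms by (simp add: sum.union_disjoint Int_Un_distrib Int_Un_distrib2)
qed

lemma TVr_super:
  assumes "R = (a,b,c,d)" "a \<le> b" "c \<le> d"
  shows "TVr \<theta> (q1 R) + TVr \<theta> (q2 R) + TVr \<theta> (q3 R) + TVr \<theta> (q4 R) \<le> TVr \<theta> R"
proof -
  have h: "sum (hdf \<theta>) (Hs (q1 R)) + sum (hdf \<theta>) (Hs (q2 R)) + sum (hdf \<theta>) (Hs (q3 R)) + sum (hdf \<theta>) (Hs (q4 R))
     \<le> sum (hdf \<theta>) (Hs R)"
    using assms by (intro sum4_le) (auto simp: hdf_nn)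
  have v: "sum (vdf \<theta>) (Vs (q1 R)) + sum (vdf \<theta>) (Vs (q2 R)) + sum (vdf \<theta>) (Vs (q3 R)) + sum (vdf \<theta>) (Vs (q4 R))
     \<le> sum (vdf \<theta>) (Vs R)"
    using assms by (intro sum4_le) (auto simp: vdf_nn)
  show ?thesis using h v unfolding TVr_def by simp
qed

lemma cells_part:
  fixes f :: "nat \<times> nat \<Rightarrow> real"
  assumes "R = (a,b,c,d)" "a \<le> b" "c \<le> d"
  shows "sum f (cells R) = sum f (cells (q1 R)) + sum f (cells (q2 R)) + sum f (cells (q3 R)) + sum f (cells (q4 R))"
  using assms by (intro sum4_eq) auto

lemma cells_sub: "cells (q1 R) \<subseteq> cells R" "cells (q2 R) \<subseteq> cells R" "cells (q3 R) \<subseteq> cells R" "cells (q4 R) \<subseteq> cells R"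
  by (cases R; auto)+



lemma tele_h:
  assumes "j \<le> j'"
  shows "\<bar>\<theta> (i,j') - \<theta> (i,j)\<bar> \<le> (\<Sum>k\<in>{j..<j'}. hdf \<theta> (i,k))"
  using assms
proof (induction j' rule: dec_induct)
  case base then show ?case by simp
next
  case (step m)
  have "\<bar>\<theta> (i,Suc m) - \<theta> (i,j)\<bar> \<le> \<bar>\<theta> (i,Suc m) - \<theta> (i,m)\<bar> + \<bar>\<theta> (i,m) - \<theta> (i,j)\<bar>" by simp
  also have "\<dots> \<le> hdf \<theta> (i,m) + (\<Sum>k\<in>{j..<m}. hdf \<theta> (i,k))" using step by (simp add: hdf_def)
  also have "\<dots> = (\<Sum>k\<in>{j..<Suc m}. hdf \<theta> (i,k))" using step by simp
  finally show ?case .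
qed

lemma tele_v:
  assumes "i \<le> i'"
  shows "\<bar>\<theta> (i',j) - \<theta> (i,j)\<bar> \<le> (\<Sum>k\<in>{i..<i'}. vdf \<theta> (k,j))"
  using assms
proof (induction i' rule: dec_induct)
  case base then show ?case by simp
next
  case (step m)
  have "\<bar>\<theta> (Suc m,j) - \<theta> (i,j)\<bar> \<le> \<bar>\<theta> (Suc m,j) - \<theta> (m,j)\<bar> + \<bar>\<theta> (m,j) - \<theta> (i,j)\<bar>" by simp
  also have "\<dots> \<le> vdf \<theta> (m,j) + (\<Sum>k\<in>{i..<m}. vdf \<theta> (k,j))" using step by (simp add: vdf_def)
  also have "\<dots> = (\<Sum>k\<in>{i..<Suc m}. vdf \<theta> (k,j))" using step by simp
  finally show ?case .
qed

lemma row_bound: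
  assumes "c \<le> j" "j < d" "c \<le> j'" "j' < d"
  shows "\<bar>\<theta> (i,j) - \<theta> (i,j')\<bar> \<le> (\<Sum>k\<in>{c..<d-1}. hdf \<theta> (i,k))"
proof -
  have gen: "\<bar>\<theta> (i,y) - \<theta> (i,x)\<bar> \<le> (\<Sum>k\<in>{c..<d-1}. hdf \<theta> (i,k))"
    if "c \<le> x" "x \<le> y" "y < d" for x y
  proof -
    have "\<bar>\<theta> (i,y) - \<theta> (i,x)\<bar> \<le> (\<Sum>k\<in>{x..<y}. hdf \<theta> (i,k))" using tele_h that by blast
    also have "\<dots> \<le> (\<Sum>k\<in>{c..<d-1}. hdf \<theta> (i,k))"
      using that by (intro sum_mono2) (auto simp: hdf_nn)
    finally show ?thesis .
  qed
  show ?thesis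
  proof (cases "j \<le> j'")
    case True then show ?thesis using gen[of j j'] assms by (simp add: abs_minus_commute)
  next
    case False then show ?thesis using gen[of j' j] assms by simp
  qed
qed

lemma col_bound:
  assumes "a \<le> i" "i < b" "a \<le> i'" "i' < b"
  shows "\<bar>\<theta> (i,j) - \<theta> (i',j)\<bar> \<le> (\<Sum>k\<in>{a..<b-1}. vdf \<theta> (k,j))"
proof -
  have gen: "\<bar>\<theta> (y,j) - \<theta> (x,j)\<bar> \<le> (\<Sum>k\<in>{a..<b-1}. vdf \<theta> (k,j))"
    if "a \<le> x" "x \<le> y" "y < b" for x y
  proof -
    have "\<bar>\<theta> (y,j) - \<theta> (x,j)\<bar> \<le> (\<Sum>k\<in>{x..<y}. vdf \<theta> (k,j))" using tele_v that by blast
    also have "\<dots> \<le> (\<Sum>k\<in>{a..<b-1}. vdf \<theta> (k,j))"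
      using that by (intro sum_mono2) (auto simp: vdf_nn)
    finally show ?thesis .
  qed
  show ?thesis
  proof (cases "i \<le> i'")
    case True then show ?thesis using gen[of i i'] assms by (simp add: abs_minus_commute)
  next
    case False then show ?thesis using gen[of i' i] assms by simp
  qed
qed

lemma avg_exists:
  fixes f :: "'a \<Rightarrow> real"
  assumes "finite I" "I \<noteq> {}"
  shows "\<exists>i\<in>I. f i * card I \<le> sum f I"
proof (rule ccontr)
  assume "\<not> ?thesis"
  then have "\<forall>i\<in>I. sum f I < f i * card I" by auto
  then have "(\<Sum>i\<in>I. sum f I) < (\<Sum>i\<in>I. f i * card I)"
    using assms by (intro sum_strict_mono) auto
  moreover have "(\<Sum>i\<in>I. f i * card I) = sum f I * card I" by (simp add: sum_distrib_right)
  ultimately show False by simp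
qed

lemma sq_le_prod:
  fixes x P Q :: real
  assumes "\<bar>x\<bar> \<le> P" "\<bar>x\<bar> \<le> Q"
  shows "x^2 \<le> P * Q"
proof -
  have "x^2 = \<bar>x\<bar> * \<bar>x\<bar>" by (simp add: power2_eq_square)
  also have "\<dots> \<le> P * Q" using assms by (intro mult_mono) auto
  finally show ?thesis .
qed

lemma sobolev:
  assumes R: "R = (a,b,c,d)" and ab: "a < b" and cd: "c < d"
    and asp1: "b - a \<le> 2 * (d - c)" and asp2: "d - c \<le> 2 * (b - a)"
  shows "\<exists>p\<in>cells R. (\<Sum>x\<in>cells R. (\<theta> x - \<theta> p)^2) \<le> 3 * (TVr \<theta> R)^2"
proof -
  define Rw where "Rw i = (\<Sum>k\<in>{c..<d-1}. hdf \<theta> (i,k))" for i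
  define Cl where "Cl j = (\<Sum>k\<in>{a..<b-1}. vdf \<theta> (k,j))" for j
  define A where "A = (\<Sum>i\<in>{a..<b}. Rw i)"
  define B where "B = (\<Sum>j\<in>{c..<d}. Cl j)"
  define s where "s = real (b - a)"
  define t where "t = real (d - c)"
  have Rw_nn: "Rw i \<ge> 0" for i unfolding Rw_def by (intro sum_nonneg) (auto simp: hdf_nn)
  have Cl_nn: "Cl j \<ge> 0" for j unfolding Cl_def by (intro sum_nonneg) (auto simp: vdf_nn)
  have A_nn: "A \<ge> 0" unfolding A_def using Rw_nn by (simp add: sum_nonneg)
  have B_nn: "B \<ge> 0" unfolding B_def using Cl_nn by (simp add: sum_nonneg)
  have hA: "sum (hdf \<theta>) (Hs R) = A"
    unfolding A_def Rw_def R by (simp add: sum.cartesian_product)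
  have "sum (vdf \<theta>) (Vs R) = (\<Sum>k\<in>{a..<b-1}. \<Sum>j\<in>{c..<d}. vdf \<theta> (k,j))"
    unfolding R by (simp add: sum.cartesian_product)
  also have "\<dots> = B" unfolding B_def Cl_def by (rule sum.swap)
  finally have hB: "sum (vdf \<theta>) (Vs R) = B" .
  have TV: "TVr \<theta> R = A + B" unfolding TVr_def hA hB ..
  obtain i0 where i0: "i0 \<in> {a..<b}" "Rw i0 * card {a..<b} \<le> A"
    using avg_exists[of "{a..<b}" Rw] ab unfolding A_def by auto
  obtain j0 where j0: "j0 \<in> {c..<d}" "Cl j0 * card {c..<d} \<le> B"
    using avg_exists[of "{c..<d}" Cl] cd unfolding B_def by auto
  have r0: "Rw i0 * s \<le> A" using i0 by (simp add: s_def)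
  have c0: "Cl j0 * t \<le> B" using j0 by (simp add: t_def)
  have pt: "(\<theta> (i,j) - \<theta> (i0,j0))^2 \<le> (Rw i + Cl j0) * (Cl j + Rw i0)"
    if "i \<in> {a..<b}" "j \<in> {c..<d}" for i j
  proof (rule sq_le_prod)
    have "\<bar>\<theta> (i,j) - \<theta> (i0,j0)\<bar> \<le> \<bar>\<theta> (i,j) - \<theta> (i,j0)\<bar> + \<bar>\<theta> (i,j0) - \<theta> (i0,j0)\<bar>" by simp
    also have "\<dots> \<le> Rw i + Cl j0"
      using row_bound[of c j d j0 \<theta> i] col_bound[of a i b i0 \<theta> j0] that i0 j0
      unfolding Rw_def Cl_def by (intro add_mono) auto
    finally show "\<bar>\<theta> (i,j) - \<theta> (i0,j0)\<bar> \<le> Rw i + Cl j0" .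
    have "\<bar>\<theta> (i,j) - \<theta> (i0,j0)\<bar> \<le> \<bar>\<theta> (i,j) - \<theta> (i0,j)\<bar> + \<bar>\<theta> (i0,j) - \<theta> (i0,j0)\<bar>" by simp
    also have "\<dots> \<le> Cl j + Rw i0"
      using row_bound[of c j d j0 \<theta> i0] col_bound[of a i b i0 \<theta> j] that i0 j0
      unfolding Rw_def Cl_def by (intro add_mono) auto
    finally show "\<bar>\<theta> (i,j) - \<theta> (i0,j0)\<bar> \<le> Cl j + Rw i0" .
  qed
  have "(\<Sum>x\<in>cells R. (\<theta> x - \<theta> (i0,j0))^2)
      = (\<Sum>i\<in>{a..<b}. \<Sum>j\<in>{c..<d}. (\<theta> (i,j) - \<theta> (i0,j0))^2)"
    unfolding R by (simp add: sum.cartesian_product)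
  also have "\<dots> \<le> (\<Sum>i\<in>{a..<b}. \<Sum>j\<in>{c..<d}. (Rw i + Cl j0) * (Cl j + Rw i0))"
    using pt by (intro sum_mono) auto
  also have "\<dots> = (\<Sum>i\<in>{a..<b}. Rw i + Cl j0) * (\<Sum>j\<in>{c..<d}. Cl j + Rw i0)"
    by (simp add: sum_product)
  also have "\<dots> = (A + s * Cl j0) * (B + t * Rw i0)"
    unfolding A_def B_def s_def t_def by (simp add: sum.distrib)
  also have "\<dots> \<le> (A + 2 * B) * (B + 2 * A)"
  proof -
    have "s \<le> 2 * t" using asp1 unfolding s_def t_def by linarith
    then have "s * Cl j0 \<le> 2 * t * Cl j0" using Cl_nn by (intro mult_right_mono) auto
    then have X: "s * Cl j0 \<le> 2 * B" using c0 by (simp add: algebra_simps)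
    have "t \<le> 2 * s" using asp2 unfolding s_def t_def by linarith
    then have "t * Rw i0 \<le> 2 * s * Rw i0" using Rw_nn by (intro mult_right_mono) auto
    then have Y: "t * Rw i0 \<le> 2 * A" using r0 by (simp add: algebra_simps)
    have "s \<ge> 0" "t \<ge> 0" by (auto simp: s_def t_def)
    then show ?thesis using X Y A_nn B_nn Cl_nn Rw_nn
      by (intro mult_mono) (auto intro: add_nonneg_nonneg mult_nonneg_nonneg)
  qed
  also have "\<dots> \<le> 3 * (TVr \<theta> R)^2"
    unfolding TV using A_nn B_nn by (simp add: power2_eq_square algebra_simps)
  finally have "(\<Sum>x\<in>cells R. (\<theta> x - \<theta> (i0,j0))^2) \<le> 3 * (TVr \<theta> R)^2" .
  then show ?thesis using i0 j0 R by (intro bexI[of _ "(i0,j0)"]) auto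
qed



datatype qt = Lf real | Nd qt qt qt qt

fun ev :: "qt \<Rightarrow> rect \<Rightarrow> mat" where
  "ev (Lf v) R p = (if p \<in> cells R then v else 0)"
| "ev (Nd t1 t2 t3 t4) R p = ev t1 (q1 R) p + ev t2 (q2 R) p + ev t3 (q3 R) p + ev t4 (q4 R) p"

lemma ev_out: "p \<notin> cells R \<Longrightarrow> ev t R p = 0"
proof (induction t arbitrary: R)
  case (Lf x) then show ?case by simp
next
  case (Nd t1 t2 t3 t4)
  have h: "p \<notin> cells (q1 R)" "p \<notin> cells (q2 R)" "p \<notin> cells (q3 R)" "p \<notin> cells (q4 R)"
    using cells_sub[of R] Nd.prems by blast+
  have "ev t1 (q1 R) p = 0" using Nd.IH(1) h(1) by blast
  moreover have "ev t2 (q2 R) p = 0" using Nd.IH(2) h(2) by blast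
  moreover have "ev t3 (q3 R) p = 0" using Nd.IH(3) h(3) by blast
  moreover have "ev t4 (q4 R) p = 0" using Nd.IH(4) h(4) by blast
  ultimately show ?case by (simp only: ev.simps)
qed

definition errs :: "mat \<Rightarrow> qt \<Rightarrow> rect \<Rightarrow> real" where
  "errs \<theta> t R = (\<Sum>p\<in>cells R. (\<theta> p - ev t R p)^2)"

lemma errs_Nd:
  assumes R: "R = (a,b,c,d)" "a \<le> b" "c \<le> d"
  shows "errs \<theta> (Nd t1 t2 t3 t4) R = errs \<theta> t1 (q1 R) + errs \<theta> t2 (q2 R) + errs \<theta> t3 (q3 R) + errs \<theta> t4 (q4 R)"
proof -
  define mi where "mi = (a+b) div 2"
  define mj where "mj = (c+d) div 2"
  have cc: "cells (q1 R) = {a..<mi}\<times>{c..<mj}" "cells (q2 R) = {a..<mi}\<times>{mj..<d}"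
     "cells (q3 R) = {mi..<b}\<times>{c..<mj}" "cells (q4 R) = {mi..<b}\<times>{mj..<d}"
    using R(1) by (simp_all add: mi_def mj_def)
  let ?f = "\<lambda>p. (\<theta> p - ev (Nd t1 t2 t3 t4) R p)^2"
  have "errs \<theta> (Nd t1 t2 t3 t4) R = sum ?f (cells (q1 R)) + sum ?f (cells (q2 R)) + sum ?f (cells (q3 R)) + sum ?f (cells (q4 R))"
    unfolding errs_def by (rule cells_part[OF R])
  moreover have "sum ?f (cells (q1 R)) = errs \<theta> t1 (q1 R)"
    unfolding errs_def
  proof (intro sum.cong refl)
    fix p assume p: "p \<in> cells (q1 R)"
    then have "p \<notin> cells (q2 R)" "p \<notin> cells (q3 R)" "p \<notin> cells (q4 R)" using cc by auto
    then show "?f p = (\<theta> p - ev t1 (q1 R) p)^2" by (simp add: ev_out)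
  qed
  moreover have "sum ?f (cells (q2 R)) = errs \<theta> t2 (q2 R)"
    unfolding errs_def
  proof (intro sum.cong refl)
    fix p assume p: "p \<in> cells (q2 R)"
    then have "p \<notin> cells (q1 R)" "p \<notin> cells (q3 R)" "p \<notin> cells (q4 R)" using cc by auto
    then show "?f p = (\<theta> p - ev t2 (q2 R) p)^2" by (simp add: ev_out)
  qed
  moreover have "sum ?f (cells (q3 R)) = errs \<theta> t3 (q3 R)"
    unfolding errs_def
  proof (intro sum.cong refl)
    fix p assume p: "p \<in> cells (q3 R)"
    then have "p \<notin> cells (q1 R)" "p \<notin> cells (q2 R)" "p \<notin> cells (q4 R)" using cc by auto
    then show "?f p = (\<theta> p - ev t3 (q3 R) p)^2" by (simp add: ev_out)
  qed
  moreover have "sum ?f (cells (q4 R)) = errs \<theta> t4 (q4 R)"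
    unfolding errs_def
  proof (intro sum.cong refl)
    fix p assume p: "p \<in> cells (q4 R)"
    then have "p \<notin> cells (q1 R)" "p \<notin> cells (q2 R)" "p \<notin> cells (q3 R)" using cc by auto
    then show "?f p = (\<theta> p - ev t4 (q4 R) p)^2" by (simp add: ev_out)
  qed
  ultimately show ?thesis by simp
qed

definition pt :: "mat \<Rightarrow> rect \<Rightarrow> nat \<times> nat" where
  "pt \<theta> R = (SOME p. p \<in> cells R \<and> (\<Sum>x\<in>cells R. (\<theta> x - \<theta> p)^2) \<le> 3 * (TVr \<theta> R)^2)"

definition qv :: "real \<Rightarrow> mat \<Rightarrow> rect \<Rightarrow> real" where
  "qv \<delta> \<theta> R = \<delta> * of_int (round (\<theta> (pt \<theta> R) / \<delta>))"

fun bld :: "real \<Rightarrow> real \<Rightarrow> mat \<Rightarrow> nat \<Rightarrow> rect \<Rightarrow> qt" where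
  "bld \<tau> \<delta> \<theta> 0 R = Lf (qv \<delta> \<theta> R)"
| "bld \<tau> \<delta> \<theta> (Suc k) R = (if TVr \<theta> R \<le> \<tau> then Lf (qv \<delta> \<theta> R)
     else Nd (bld \<tau> \<delta> \<theta> k (q1 R)) (bld \<tau> \<delta> \<theta> k (q2 R)) (bld \<tau> \<delta> \<theta> k (q3 R)) (bld \<tau> \<delta> \<theta> k (q4 R)))"

fun splits :: "qt \<Rightarrow> nat" where
  "splits (Lf v) = 0"
| "splits (Nd t1 t2 t3 t4) = Suc (splits t1 + splits t2 + splits t3 + splits t4)"

lemma qv_close:
  assumes "\<delta> > 0"
  shows "\<bar>\<theta> (pt \<theta> R) - qv \<delta> \<theta> R\<bar> \<le> \<delta> / 2"
proof -
  let ?y = "\<theta> (pt \<theta> R) / \<delta>"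
  have "\<theta> (pt \<theta> R) - qv \<delta> \<theta> R = \<delta> * (?y - of_int (round ?y))"
    using assms unfolding qv_def by (simp add: algebra_simps)
  then have "\<bar>\<theta> (pt \<theta> R) - qv \<delta> \<theta> R\<bar> = \<delta> * \<bar>of_int (round ?y) - ?y\<bar>"
    using assms by (simp add: abs_mult abs_minus_commute)
  also have "\<dots> \<le> \<delta> * (1/2)" using assms of_int_round_abs_le[of ?y] by (intro mult_left_mono) auto
  finally show ?thesis by simp
qed

lemma sq_sum: "(u+w)^2 \<le> 2*u^2 + 2*(w::real)^2"
proof -
  have "0 \<le> (u-w)^2" by simp
  then show ?thesis by (simp add: power2_eq_square algebra_simps)
qed

lemma leaf_bound:
  assumes R: "R = (a,b,c,d)" and d: "\<delta> > 0"
    and shape: "b - a = 0 \<or> d - c = 0 \<or> (b - a \<le> 2 * (d - c) \<and> d - c \<le> 2 * (b - a))"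
  shows "errs \<theta> (Lf (qv \<delta> \<theta> R)) R \<le> 6 * (TVr \<theta> R)^2 + 2 * \<delta>^2 * card (cells R)"
proof (cases "a < b \<and> c < d")
  case False
  then have "cells R = {}" using R by auto
  then have "errs \<theta> (Lf (qv \<delta> \<theta> R)) R = 0" unfolding errs_def by simp
  moreover have "0 \<le> 6 * (TVr \<theta> R)^2 + 2 * \<delta>^2 * card (cells R)" by simp
  ultimately show ?thesis by linarith
next
  case True
  then have "b - a \<le> 2 * (d - c) \<and> d - c \<le> 2 * (b - a)" using shape by auto
  then have "\<exists>p. p \<in> cells R \<and> (\<Sum>x\<in>cells R. (\<theta> x - \<theta> p)^2) \<le> 3 * (TVr \<theta> R)^2"
    using sobolev[OF R] True by blast
  then have "pt \<theta> R \<in> cells R \<and> (\<Sum>x\<in>cells R. (\<theta> x - \<theta> (pt \<theta> R))^2) \<le> 3 * (TVr \<theta> R)^2"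
    unfolding pt_def by (rule someI_ex)
  then have P: "pt \<theta> R \<in> cells R" "(\<Sum>x\<in>cells R. (\<theta> x - \<theta> (pt \<theta> R))^2) \<le> 3 * (TVr \<theta> R)^2"
    by auto
  let ?v = "qv \<delta> \<theta> R" and ?p = "pt \<theta> R"
  have cl: "\<bar>\<theta> ?p - ?v\<bar> \<le> \<delta>" using qv_close[OF d, of \<theta> R] d by simp
  have "errs \<theta> (Lf ?v) R = (\<Sum>x\<in>cells R. (\<theta> x - ?v)^2)"
    unfolding errs_def by (intro sum.cong refl) simp
  also have "\<dots> \<le> (\<Sum>x\<in>cells R. 2 * (\<theta> x - \<theta> ?p)^2 + 2 * \<delta>^2)"
  proof (intro sum_mono)
    fix x
    have "(\<theta> ?p - ?v)^2 \<le> \<delta> * \<delta>" using cl by (intro sq_le_prod)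
    then have "(\<theta> ?p - ?v)^2 \<le> \<delta>^2" by (simp add: power2_eq_square)
    moreover have "(\<theta> x - ?v)^2 \<le> 2 * (\<theta> x - \<theta> ?p)^2 + 2 * (\<theta> ?p - ?v)^2"
      using sq_sum[of "\<theta> x - \<theta> ?p" "\<theta> ?p - ?v"] by simp
    ultimately show "(\<theta> x - ?v)^2 \<le> 2 * (\<theta> x - \<theta> ?p)^2 + 2 * \<delta>^2" by linarith
  qed
  also have "\<dots> = 2 * (\<Sum>x\<in>cells R. (\<theta> x - \<theta> ?p)^2) + 2 * \<delta>^2 * card (cells R)"
    by (simp add: sum.distrib sum_distrib_left)
  also have "\<dots> \<le> 6 * (TVr \<theta> R)^2 + 2 * \<delta>^2 * card (cells R)" using P by simp
  finally show ?thesis .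
qed



lemma shape_ok:
  assumes "x \<in> {q, Suc q}" "y \<in> {q, Suc q}"
  shows "x = 0 \<or> y = 0 \<or> (x \<le> 2 * y \<and> y \<le> 2 * x)"
  using assms by auto

lemma TVr_zero:
  assumes "R = (a,b,c,d)" "b - a \<le> 1" "d - c \<le> 1"
  shows "TVr \<theta> R = 0"
proof -
  have "Hs R = {}" "Vs R = {}" using assms by auto
  then show ?thesis unfolding TVr_def by simp
qed

lemma half_split:
  assumes "a \<le> b" "b - a \<in> {q, Suc q}"
  shows "a \<le> (a+b) div 2" "(a+b) div 2 \<le> b" "(a+b) div 2 - a \<in> {q div 2, Suc (q div 2)}"
    "b - (a+b) div 2 \<in> {q div 2, Suc (q div 2)}"
  using assms by auto

lemma bld_main:
  assumes tau: "\<tau> > 0" and del: "\<delta> > 0"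
  shows "\<And>R a b c d q. R = (a,b,c,d) \<Longrightarrow> a \<le> b \<Longrightarrow> c \<le> d \<Longrightarrow> b - a \<in> {q, Suc q} \<Longrightarrow> d - c \<in> {q, Suc q}
     \<Longrightarrow> q < 2^k \<Longrightarrow>
     errs \<theta> (bld \<tau> \<delta> \<theta> k R) R \<le> 6*\<tau>*TVr \<theta> R + 2*\<delta>^2*card (cells R)
     \<and> real (splits (bld \<tau> \<delta> \<theta> k R)) * \<tau> \<le> real k * TVr \<theta> R"
proof (induction k)
  case 0
  then have "q = 0" by simp
  then have "b - a \<le> 1" "d - c \<le> 1" using 0 by auto
  then have tv: "TVr \<theta> R = 0" using TVr_zero[OF 0(1)] by blast
  have "errs \<theta> (Lf (qv \<delta> \<theta> R)) R \<le> 6 * (TVr \<theta> R)^2 + 2 * \<delta>^2 * card (cells R)"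
    using leaf_bound[OF 0(1) del] shape_ok[OF 0(4,5)] by blast
  then show ?case using tv by simp
next
  case (Suc k)
  show ?case
  proof (cases "TVr \<theta> R \<le> \<tau>")
    case True
    have "errs \<theta> (Lf (qv \<delta> \<theta> R)) R \<le> 6 * (TVr \<theta> R)^2 + 2 * \<delta>^2 * card (cells R)"
      using leaf_bound[OF Suc.prems(1) del] shape_ok[OF Suc.prems(4,5)] by blast
    moreover have "(TVr \<theta> R)^2 \<le> \<tau> * TVr \<theta> R"
      using True TVr_nn[of \<theta> R] by (simp add: power2_eq_square mult_right_mono)
    ultimately show ?thesis using True TVr_nn[of \<theta> R] by simp
  next
    case False
    define mi where "mi = (a+b) div 2"
    define mj where "mj = (c+d) div 2"
    note hr = half_split[OF Suc.prems(2,4), folded mi_def]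
    note hc = half_split[OF Suc.prems(3,5), folded mj_def]
    have qk: "q div 2 < 2^k" using Suc.prems(6) by simp
    have Q: "q1 R = (a,mi,c,mj)" "q2 R = (a,mi,mj,d)" "q3 R = (mi,b,c,mj)" "q4 R = (mi,b,mj,d)"
      using Suc.prems(1) by (simp_all add: mi_def mj_def)
    let ?t1 = "bld \<tau> \<delta> \<theta> k (q1 R)" and ?t2 = "bld \<tau> \<delta> \<theta> k (q2 R)"
    let ?t3 = "bld \<tau> \<delta> \<theta> k (q3 R)" and ?t4 = "bld \<tau> \<delta> \<theta> k (q4 R)"
    have I1: "errs \<theta> ?t1 (q1 R) \<le> 6*\<tau>*TVr \<theta> (q1 R) + 2*\<delta>^2*card (cells (q1 R))
       \<and> real (splits ?t1) * \<tau> \<le> real k * TVr \<theta> (q1 R)"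
      using Suc.IH[OF Q(1) _ _ _ _ qk] hr hc by blast
    have I2: "errs \<theta> ?t2 (q2 R) \<le> 6*\<tau>*TVr \<theta> (q2 R) + 2*\<delta>^2*card (cells (q2 R))
       \<and> real (splits ?t2) * \<tau> \<le> real k * TVr \<theta> (q2 R)"
      using Suc.IH[OF Q(2) _ _ _ _ qk] hr hc by blast
    have I3: "errs \<theta> ?t3 (q3 R) \<le> 6*\<tau>*TVr \<theta> (q3 R) + 2*\<delta>^2*card (cells (q3 R))
       \<and> real (splits ?t3) * \<tau> \<le> real k * TVr \<theta> (q3 R)"
      using Suc.IH[OF Q(3) _ _ _ _ qk] hr hc by blast
    have I4: "errs \<theta> ?t4 (q4 R) \<le> 6*\<tau>*TVr \<theta> (q4 R) + 2*\<delta>^2*card (cells (q4 R))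
       \<and> real (splits ?t4) * \<tau> \<le> real k * TVr \<theta> (q4 R)"
      using Suc.IH[OF Q(4) _ _ _ _ qk] hr hc by blast
    have bl: "bld \<tau> \<delta> \<theta> (Suc k) R = Nd ?t1 ?t2 ?t3 ?t4" using False by simp
    have sup: "TVr \<theta> (q1 R) + TVr \<theta> (q2 R) + TVr \<theta> (q3 R) + TVr \<theta> (q4 R) \<le> TVr \<theta> R"
      using TVr_super[OF Suc.prems(1-3)] .
    have cd: "real (card (cells R)) = real (card (cells (q1 R))) + real (card (cells (q2 R)))
        + real (card (cells (q3 R))) + real (card (cells (q4 R)))"
      using cells_part[OF Suc.prems(1-3), of "\<lambda>_. 1"] by simp
    have E: "errs \<theta> (Nd ?t1 ?t2 ?t3 ?t4) R = errs \<theta> ?t1 (q1 R) + errs \<theta> ?t2 (q2 R) + errs \<theta> ?t3 (q3 R) + errs \<theta> ?t4 (q4 R)"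
      using errs_Nd[OF Suc.prems(1-3)] .
    have e: "errs \<theta> (Nd ?t1 ?t2 ?t3 ?t4) R \<le> 6*\<tau>*TVr \<theta> R + 2*\<delta>^2*card (cells R)"
    proof -
      have "errs \<theta> (Nd ?t1 ?t2 ?t3 ?t4) R \<le> 6*\<tau>*(TVr \<theta> (q1 R) + TVr \<theta> (q2 R) + TVr \<theta> (q3 R) + TVr \<theta> (q4 R))
         + 2*\<delta>^2*(real (card (cells (q1 R))) + real (card (cells (q2 R)))
        + real (card (cells (q3 R))) + real (card (cells (q4 R))))"
        unfolding E using I1 I2 I3 I4 by (simp add: algebra_simps)
      also have "\<dots> \<le> 6*\<tau>*TVr \<theta> R + 2*\<delta>^2*card (cells R)"
        unfolding cd using sup tau by simp
      finally show ?thesis .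
    qed
    have s: "real (splits (Nd ?t1 ?t2 ?t3 ?t4)) * \<tau> \<le> real (Suc k) * TVr \<theta> R"
    proof -
      have "real (splits (Nd ?t1 ?t2 ?t3 ?t4)) * \<tau> = \<tau> + real (splits ?t1) * \<tau> + real (splits ?t2) * \<tau>
          + real (splits ?t3) * \<tau> + real (splits ?t4) * \<tau>" by (simp add: algebra_simps)
      also have "\<dots> \<le> TVr \<theta> R + real k * (TVr \<theta> (q1 R) + TVr \<theta> (q2 R) + TVr \<theta> (q3 R) + TVr \<theta> (q4 R))"
        using I1 I2 I3 I4 False by (simp add: algebra_simps)
      also have "\<dots> \<le> TVr \<theta> R + real k * TVr \<theta> R"
        using sup by (simp add: mult_left_mono)
      also have "\<dots> = real (Suc k) * TVr \<theta> R" by (simp add: algebra_simps)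
      finally show ?thesis .
    qed
    show ?thesis unfolding bl using e s by blast
  qed
qed



fun lvs :: "qt \<Rightarrow> real set" where
  "lvs (Lf v) = {v}"
| "lvs (Nd t1 t2 t3 t4) = lvs t1 \<union> lvs t2 \<union> lvs t3 \<union> lvs t4"

fun ser :: "qt \<Rightarrow> real option list" where
  "ser (Lf v) = [Some v]"
| "ser (Nd t1 t2 t3 t4) = None # ser t1 @ ser t2 @ ser t3 @ ser t4"

lemma ser_app: "ser t @ xs = ser t' @ ys \<Longrightarrow> t = t' \<and> xs = ys"
proof (induction t arbitrary: t' xs ys)
  case (Lf v)
  then show ?case by (cases t') auto
next
  case (Nd t1 t2 t3 t4)
  show ?case
  proof (cases t')
    case (Lf w) then show ?thesis using Nd.prems by simp
  next
    case (Nd u1 u2 u3 u4)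
    then have "ser t1 @ (ser t2 @ ser t3 @ ser t4 @ xs) = ser u1 @ (ser u2 @ ser u3 @ ser u4 @ ys)"
      using Nd.prems by simp
    then have e1: "t1 = u1" and r1: "ser t2 @ (ser t3 @ ser t4 @ xs) = ser u2 @ (ser u3 @ ser u4 @ ys)"
      using Nd.IH(1) by blast+
    then have e2: "t2 = u2" and r2: "ser t3 @ (ser t4 @ xs) = ser u3 @ (ser u4 @ ys)"
      using Nd.IH(2) by blast+
    then have e3: "t3 = u3" and r3: "ser t4 @ xs = ser u4 @ ys"
      using Nd.IH(3) by blast+
    then have e4: "t4 = u4" and r4: "xs = ys"
      using Nd.IH(4) by blast+
    show ?thesis using Nd e1 e2 e3 e4 r4 by simp
  qed
qed

lemma ser_inj: "inj ser"
  by (intro injI) (use ser_app[of _ "[]" _ "[]"] in simp)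

lemma ser_len: "length (ser t) = 4 * splits t + 1"
  by (induction t) auto

lemma ser_set: "set (ser t) \<subseteq> insert None (Some ` lvs t)"
  by (induction t) auto

lemma geom_le:
  fixes a :: nat
  assumes "a \<ge> 2"
  shows "(\<Sum>i\<le>m. a^i) \<le> a^(Suc m)"
proof (induction m)
  case 0 then show ?case using assms by simp
next
  case (Suc m)
  have "(\<Sum>i\<le>Suc m. a^i) = (\<Sum>i\<le>m. a^i) + a^(Suc m)" by simp
  also have "\<dots> \<le> 2 * a^(Suc m)" using Suc by simp
  also have "\<dots> \<le> a * a^(Suc m)" using assms by (intro mult_right_mono) auto
  finally show ?case by simp
qed

lemma tree_count:
  fixes S :: nat
  assumes G: "finite G" "G \<noteq> {}"
  defines "T \<equiv> {t. splits t \<le> S \<and> lvs t \<subseteq> G}"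
  shows "finite T" "card T \<le> (card G + 1)^(4*S+2)"
proof -
  define A where "A = insert None (Some ` G)"
  define LS where "LS = {xs. set xs \<subseteq> A \<and> length xs \<le> 4*S+1}"
  have finA: "finite A" using G unfolding A_def by simp
  have cA: "card A = card G + 1"
    unfolding A_def using G by (simp add: card_image)
  have sub: "ser ` T \<subseteq> LS"
  proof
    fix xs assume "xs \<in> ser ` T"
    then obtain t where t: "t \<in> T" "xs = ser t" by auto
    have "set xs \<subseteq> A" using ser_set[of t] t unfolding T_def A_def by auto
    moreover have "length xs \<le> 4*S+1" using t ser_len[of t] unfolding T_def by simp
    ultimately show "xs \<in> LS" unfolding LS_def by simp
  qed
  have finLS: "finite LS" unfolding LS_def using finite_lists_length_le[OF finA] .
  have inj: "inj_on ser T" using ser_inj by (simp add: inj_on_def inj_def)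
  show fT: "finite T"
    using finite_imageD[OF finite_subset[OF sub finLS] inj] .
  have "card T = card (ser ` T)" using card_image[OF inj] by simp
  also have "\<dots> \<le> card LS" using card_mono[OF finLS sub] .
  also have "\<dots> = (\<Sum>i\<le>4*S+1. card A^i)" unfolding LS_def using card_lists_length_le[OF finA] .
  also have "\<dots> \<le> card A^(Suc (4*S+1))"
    using G cA by (intro geom_le) (simp add: Suc_le_eq card_gt_0_iff)
  finally show "card T \<le> (card G + 1)^(4*S+2)" using cA by simp
qed

lemma lvs_bld:
  assumes del: "\<delta> > 0" and bnd: "\<And>p. \<bar>\<theta> p\<bar> \<le> L"
  shows "lvs (bld \<tau> \<delta> \<theta> k R) \<subseteq> (\<lambda>z. \<delta> * of_int z) ` {-(\<lceil>L/\<delta>\<rceil>+1)..\<lceil>L/\<delta>\<rceil>+1}"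
proof -
  have leaf: "qv \<delta> \<theta> R' \<in> (\<lambda>z. \<delta> * of_int z) ` {-(\<lceil>L/\<delta>\<rceil>+1)..\<lceil>L/\<delta>\<rceil>+1}" for R'
  proof -
    let ?y = "\<theta> (pt \<theta> R') / \<delta>"
    have "\<bar>?y\<bar> \<le> L / \<delta>" using bnd[of "pt \<theta> R'"] del by (simp add: abs_divide divide_right_mono)
    moreover have "\<bar>of_int (round ?y) - ?y\<bar> \<le> 1/2" by (rule of_int_round_abs_le)
    ultimately have h1: "\<bar>real_of_int (round ?y)\<bar> \<le> L/\<delta> + 1" by linarith
    have h2: "L/\<delta> \<le> of_int \<lceil>L/\<delta>\<rceil>" by (rule le_of_int_ceiling)
    have "\<bar>real_of_int (round ?y)\<bar> \<le> of_int \<lceil>L/\<delta>\<rceil> + 1" using h1 h2 by linarith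
    then have "real_of_int \<bar>round ?y\<bar> \<le> real_of_int (\<lceil>L/\<delta>\<rceil> + 1)" by simp
    then have "\<bar>round ?y\<bar> \<le> \<lceil>L/\<delta>\<rceil> + 1" by (simp only: of_int_le_iff)
    then have "round ?y \<in> {-(\<lceil>L/\<delta>\<rceil>+1)..\<lceil>L/\<delta>\<rceil>+1}" by auto
    then show ?thesis unfolding qv_def by auto
  qed
  show ?thesis
  proof (induction k arbitrary: R)
    case 0 then show ?case using leaf by simp
  next
    case (Suc k) then show ?case using leaf by simp
  qed
qed

lemma exists_pow2:
  fixes n :: nat
  assumes "n \<ge> 1"
  shows "\<exists>D. n < 2^D \<and> 2^D \<le> 2*n"
  using assms
proof (induction n rule: dec_induct)
  case base then show ?case by (intro exI[of _ 1]) simp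
next
  case (step m)
  then obtain D where D: "m < 2^D" "2^D \<le> 2*m" by blast
  show ?case
  proof (cases "Suc m < 2^D")
    case True then show ?thesis using D by (intro exI[of _ D]) simp
  next
    case False
    then have "Suc m = 2^D" using D by simp
    then show ?thesis by (intro exI[of _ "Suc D"]) simp
  qed
qed

lemma ln2_ge: "ln (2::real) \<ge> 1/2"
proof -
  have "exp 1 \<le> (4::real)" using exp_le by simp
  then have "1 \<le> ln (4::real)" by (metis exp_gt_zero ln_exp ln_le_cancel_iff zero_less_numeral)
  moreover have "ln (4::real) = 2 * ln 2"
    using ln_realpow[of 2 2] by simp
  ultimately show ?thesis by simp
qed



lemma TV_eq: "TV n n \<theta> = TVr \<theta> (0,n,0,n)"
  unfolding TV_def TVr_def hdf_def vdf_def
  by (simp add: sum.cartesian_product atLeast0LessThan case_prod_beta')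

lemma frob_eq: "frob_dist n n \<theta> g = sqrt (\<Sum>p\<in>cells (0,n,0,n). (\<theta> p - g p)^2)"
  unfolding frob_dist_def by (simp add: sum.cartesian_product atLeast0LessThan)

lemma entry_bound:
  assumes "\<theta> \<in> mat_space n n" "sup_norm n n \<theta> \<le> L" "L > 0"
  shows "\<bar>\<theta> p\<bar> \<le> L"
proof (cases "fst p < n \<and> snd p < n")
  case True
  have fin: "finite ({\<bar>\<theta> (i, j)\<bar> | i j. i < n \<and> j < n} \<union> {0})"
  proof -
    have "{\<bar>\<theta> (i, j)\<bar> | i j. i < n \<and> j < n} = (\<lambda>(i,j). \<bar>\<theta> (i,j)\<bar>) ` ({..<n} \<times> {..<n})" by auto
    then show ?thesis by simp
  qed
  have "\<bar>\<theta> (fst p, snd p)\<bar> \<in> {\<bar>\<theta> (i, j)\<bar> | i j. i < n \<and> j < n} \<union> {0}" using True by blast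
  then have "\<bar>\<theta> (fst p, snd p)\<bar> \<le> sup_norm n n \<theta>" unfolding sup_norm_def using fin by (intro Max_ge) auto
  then show ?thesis using assms by simp
next
  case False
  then have "\<theta> p = 0" using assms(1) unfolding mat_space_def by (cases p) auto
  then show ?thesis using assms by simp
qed

lemma cov_le:
  assumes "finite K" "K \<subseteq> mat_space n n" "\<forall>\<theta>\<in>A. \<exists>c\<in>K. frob_dist n n \<theta> c \<le> eps"
  shows "covering_number n n A eps \<le> card K"
  unfolding covering_number_def using assms by (intro Least_le) blast

lemma ln_cov_le:
  assumes "real N \<le> B" "B \<ge> 1"
  shows "ln (real N) \<le> ln B"
proof (cases "N = 0")
  case True then show ?thesis using assms by simp
next
  case False then show ?thesis using assms by simp
qed



lemma D_bound:
  fixes n D :: nat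
  assumes n: "n \<ge> 2" and D: "2^D \<le> 2*n"
  shows "real D \<le> 4 * ln (real n)"
proof -
  have "real D * ln 2 = ln (2^D)" by (simp add: ln_realpow)
  also have "\<dots> \<le> ln (2 * real n)"
  proof -
    have "(2::real)^D \<le> 2 * real n" using D by (metis of_nat_le_iff of_nat_mult of_nat_numeral of_nat_power)
    then show ?thesis using n by (subst ln_le_cancel_iff) auto
  qed
  also have "\<dots> = ln 2 + ln (real n)" using n by (simp add: ln_mult)
  also have "\<dots> \<le> 2 * ln (real n)" using n by simp
  finally have "real D * ln 2 \<le> 2 * ln (real n)" .
  moreover have "real D * (1/2) \<le> real D * ln 2" using ln2_ge by (intro mult_left_mono) auto
  ultimately show ?thesis by simp
qed

lemma fac1:
  fixes n D S :: nat and V eps \<tau> M :: real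
  assumes n: "n \<ge> 2" and V: "V > 0" and e: "eps > 0" and tau: "\<tau> = eps^2 / (12 * V)"
    and S: "S = nat \<lfloor>real D * V / \<tau>\<rfloor>" and D: "2^D \<le> 2*n"
    and M: "M = max (V\<^sup>2 * ln (real n) / eps\<^sup>2) 1"
  shows "real (4*S+2) \<le> 194 * M"
proof -
  have tp: "\<tau> > 0" using tau e V by simp
  have "real (4*S+2) = 4 * real S + 2" by simp
  also have "\<dots> \<le> 4 * (real D * V / \<tau>) + 2"
  proof -
    have "real D * V / \<tau> \<ge> 0" using V tp by simp
    then have "real S \<le> real D * V / \<tau>" unfolding S by simp
    then show ?thesis by simp
  qed
  also have "\<dots> = 48 * real D * (V^2 / eps^2) + 2"
    unfolding tau using V e by (simp add: field_simps power2_eq_square)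
  also have "\<dots> \<le> 48 * (4 * ln (real n)) * (V^2 / eps^2) + 2"
    using D_bound[OF n D] by (intro add_mono mult_right_mono mult_left_mono) auto
  also have "\<dots> = 192 * (V^2 * ln (real n) / eps^2) + 2" by simp
  also have "\<dots> \<le> 192 * M + 2 * M" unfolding M by (intro add_mono) auto
  finally show ?thesis by simp
qed

lemma fac2:
  fixes n :: nat and L eps \<delta> x :: real and Z :: int and G :: "real set"
  assumes n: "n \<ge> 2" and L: "L > 0" and e: "eps > 0" and small: "eps < L * real n"
    and del: "\<delta> = eps / (2 * real n)" and Z: "Z = \<lceil>L/\<delta>\<rceil> + 1"
    and G: "G = (\<lambda>z. \<delta> * of_int z) ` {-Z..Z}" and x: "x = 1 + 2 * L * real n / eps"
  shows "ln (real (card G + 1)) \<le> 3 * ln x"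
proof -
  have dp: "\<delta> > 0" using del e n by simp
  have Zpos: "Z \<ge> 1" unfolding Z using L dp by (simp add: less_le_trans[OF _ less_imp_le[OF divide_pos_pos[OF L dp]]])
  have x2: "x \<ge> 2"
  proof -
    have "L * real n / eps > 1" using small e by simp
    then show ?thesis unfolding x by simp
  qed
  have cG: "real (card G) \<le> 2 * real_of_int Z + 1"
  proof -
    have "card G \<le> card {-Z..Z}" unfolding G by (rule card_image_le) simp
    also have "card {-Z..Z} = nat (2*Z + 1)" by simp
    finally show ?thesis using Zpos by linarith
  qed
  have c1: "real_of_int \<lceil>L/\<delta>\<rceil> \<le> L/\<delta> + 1" by (rule of_int_ceiling_le_add_one)
  have c2: "real_of_int Z = real_of_int \<lceil>L/\<delta>\<rceil> + 1" unfolding Z by simp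
  have c3: "real (card G + 1) = real (card G) + 1" by simp
  have "real (card G + 1) \<le> 2 * (L/\<delta>) + 6" using cG c1 c2 c3 by linarith
  also have "L/\<delta> = 2 * L * real n / eps" unfolding del using e n by (simp add: field_simps)
  also have "2 * (2 * L * real n / eps) + 6 = 2 * x + 4" unfolding x by simp
  also have "\<dots> \<le> 4 * x" using x2 by simp
  finally have cx: "real (card G + 1) \<le> 4 * x" .
  have "ln (real (card G + 1)) \<le> ln (4 * x)" using cx x2 by (subst ln_le_cancel_iff) auto
  also have "\<dots> = ln 4 + ln x" using x2 by (simp add: ln_mult)
  also have "\<dots> \<le> 3 * ln x"
  proof -
    have "(4::real) \<le> x * x" using x2 mult_mono[of 2 x 2 x] by simp
    then have "ln (4::real) \<le> ln (x * x)" using x2 by (subst ln_le_cancel_iff) auto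
    also have "\<dots> = 2 * ln x" using x2 by (simp add: ln_mult)
    finally show ?thesis by simp
  qed
  finally show ?thesis .
qed



lemma main_bound:
  fixes n :: nat and V L eps :: real
  assumes n: "n \<ge> 2" and V: "V > 0" and L: "L > 0" and e: "eps > 0"
  shows "ln (real (covering_number n n (TV_class n n V L) eps))
     \<le> 2000 * ln (real n) * ln (1 + 2 * L * real n / eps) * max (V\<^sup>2 * ln (real n) / eps\<^sup>2) 1"
proof -
  define N where "N = covering_number n n (TV_class n n V L) eps"
  define x where "x = 1 + 2 * L * real n / eps"
  define M where "M = max (V\<^sup>2 * ln (real n) / eps\<^sup>2) 1"
  define Sq where "Sq = (0::nat, n, 0::nat, n)"
  have lnn: "ln (real n) \<ge> 1/2"
  proof -
    have "ln (2::real) \<le> ln (real n)" using n by simp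
    then show ?thesis using ln2_ge by linarith
  qed
  have M1: "M \<ge> 1" unfolding M_def by simp
  have x1: "x > 1" unfolding x_def using L e n by simp
  have lnx: "ln x > 0" using x1 by simp
  have rhs_nn: "0 \<le> 2000 * ln (real n) * ln x * M" using lnn lnx M1 by simp
  have cardSq: "card (cells Sq) = n * n" unfolding Sq_def by simp
  have "ln (real N) \<le> 2000 * ln (real n) * ln x * M"
  proof (cases "L * real n \<le> eps")
    case True
    define K where "K = {(\<lambda>_::nat\<times>nat. 0::real)}"
    have "N \<le> card K"
      unfolding N_def
    proof (rule cov_le)
      show "finite K" unfolding K_def by simp
      show "K \<subseteq> mat_space n n" unfolding K_def mat_space_def by simp
      show "\<forall>\<theta>\<in>TV_class n n V L. \<exists>c\<in>K. frob_dist n n \<theta> c \<le> eps"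
      proof
        fix \<theta> assume th: "\<theta> \<in> TV_class n n V L"
        then have bnd: "\<And>p. \<bar>\<theta> p\<bar> \<le> L" using entry_bound L unfolding TV_class_def by blast
        have "frob_dist n n \<theta> (\<lambda>_. 0) = sqrt (\<Sum>p\<in>cells Sq. (\<theta> p)^2)"
          unfolding frob_eq Sq_def by simp
        also have "\<dots> \<le> sqrt (\<Sum>p\<in>cells Sq. L * L)"
          using bnd by (intro real_sqrt_le_mono sum_mono sq_le_prod) auto
        also have "\<dots> = sqrt ((real n * L)^2)" using cardSq by (simp add: power2_eq_square algebra_simps)
        also have "\<dots> = real n * L" using L by simp
        also have "\<dots> \<le> eps" using True by (simp add: mult.commute)
        finally show "\<exists>c\<in>K. frob_dist n n \<theta> c \<le> eps" unfolding K_def by blast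
      qed
    qed
    then have "real N \<le> 1" unfolding K_def by simp
    then have "ln (real N) \<le> ln 1" by (intro ln_cov_le) auto
    then have "ln (real N) \<le> 0" by simp
    then show ?thesis using rhs_nn by linarith
  next
    case False
    then have small: "eps < L * real n" by simp
    define \<delta> where "\<delta> = eps / (2 * real n)"
    define \<tau> where "\<tau> = eps^2 / (12 * V)"
    have del: "\<delta> > 0" unfolding \<delta>_def using e n by simp
    have tau: "\<tau> > 0" unfolding \<tau>_def using e V by simp
    obtain D where D: "n < 2^D" "2^D \<le> 2*n" using exists_pow2[of n] n by auto
    define Z where "Z = \<lceil>L/\<delta>\<rceil> + 1"
    define G where "G = (\<lambda>z. \<delta> * of_int z) ` {-Z..Z}"
    define S where "S = nat \<lfloor>real D * V / \<tau>\<rfloor>"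
    define T where "T = {t. splits t \<le> S \<and> lvs t \<subseteq> G}"
    define K where "K = (\<lambda>t. ev t Sq) ` T"
    have Zpos: "Z \<ge> 1" unfolding Z_def using L del by (simp add: order.strict_trans2[of _ 0] divide_pos_pos less_le_trans[OF _ less_imp_le[OF divide_pos_pos[OF L del]]])
    have finG: "finite G" unfolding G_def by simp
    have Gne: "G \<noteq> {}" unfolding G_def using Zpos by auto
    have finT: "finite T" and cT: "card T \<le> (card G + 1)^(4*S+2)"
      using tree_count[OF finG Gne, of S] unfolding T_def by auto
    have cover: "\<forall>\<theta>\<in>TV_class n n V L. \<exists>c\<in>K. frob_dist n n \<theta> c \<le> eps"
    proof
      fix \<theta> assume th: "\<theta> \<in> TV_class n n V L"
      then have bnd: "\<And>p. \<bar>\<theta> p\<bar> \<le> L" using entry_bound L unfolding TV_class_def by blast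
      have tv: "TVr \<theta> Sq \<le> V" using th TV_eq[of n \<theta>] unfolding TV_class_def Sq_def by simp
      define t where "t = bld \<tau> \<delta> \<theta> D Sq"
      have BM: "errs \<theta> t Sq \<le> 6*\<tau>*TVr \<theta> Sq + 2*\<delta>^2*card (cells Sq)
          \<and> real (splits t) * \<tau> \<le> real D * TVr \<theta> Sq"
        unfolding t_def using bld_main[OF tau del, of Sq 0 n 0 n n D \<theta>] D unfolding Sq_def by simp
      have "errs \<theta> t Sq \<le> 6*\<tau>*V + 2*\<delta>^2*(real n * real n)"
        using BM tv tau cardSq by (smt (verit) mult_left_mono of_nat_mult)
      also have "\<dots> = eps^2"
        unfolding \<tau>_def \<delta>_def using V n by (simp add: field_simps power2_eq_square)
      finally have er: "errs \<theta> t Sq \<le> eps^2" .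
      have "frob_dist n n \<theta> (ev t Sq) = sqrt (errs \<theta> t Sq)"
        unfolding frob_eq errs_def Sq_def ..
      also have "\<dots> \<le> sqrt (eps^2)" by (rule real_sqrt_le_mono[OF er])
      also have "\<dots> = eps" using e by simp
      finally have fd: "frob_dist n n \<theta> (ev t Sq) \<le> eps" .
      have "real (splits t) * \<tau> \<le> real D * V"
        using BM tv by (smt (verit) mult_left_mono of_nat_0_le_iff)
      then have "real (splits t) \<le> real D * V / \<tau>" using tau by (simp add: field_simps)
      then have sp: "splits t \<le> S" unfolding S_def by (rule le_nat_floor)
      have lv: "lvs t \<subseteq> G" unfolding t_def G_def Z_def using lvs_bld[OF del, of \<theta> L] bnd by blast
      have "t \<in> T" unfolding T_def using sp lv by simp
      then show "\<exists>c\<in>K. frob_dist n n \<theta> c \<le> eps" unfolding K_def using fd by blast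
    qed
    have Ksub: "K \<subseteq> mat_space n n"
    proof
      fix g assume "g \<in> K"
      then obtain t where g: "g = ev t Sq" unfolding K_def by auto
      show "g \<in> mat_space n n" unfolding mat_space_def g
        by (auto intro!: ev_out simp: Sq_def)
    qed
    have finK: "finite K" unfolding K_def using finT by simp
    have "N \<le> card K" unfolding N_def using cov_le[OF finK Ksub cover] .
    also have "\<dots> \<le> card T" unfolding K_def using card_image_le[OF finT] .
    also have "\<dots> \<le> (card G + 1)^(4*S+2)" using cT .
    finally have "real N \<le> real ((card G + 1)^(4*S+2))" by linarith
    moreover have "(1::nat) \<le> (card G + 1)^(4*S+2)" by (rule one_le_power) simp
    then have "(1::real) \<le> real ((card G + 1)^(4*S+2))" by (metis of_nat_1 of_nat_le_iff)
    ultimately have "ln (real N) \<le> ln (real ((card G + 1)^(4*S+2)))"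
      by (rule ln_cov_le)
    also have "\<dots> = real (4*S+2) * ln (real (card G + 1))"
      unfolding of_nat_power by (rule ln_realpow)
    also have "\<dots> \<le> (194 * M) * (3 * ln x)"
    proof (rule mult_mono)
      show "real (4*S+2) \<le> 194 * M" using fac1[OF n V e \<tau>_def S_def D(2) M_def] .
      show "ln (real (card G + 1)) \<le> 3 * ln x"
        using fac2[OF n L e small \<delta>_def Z_def G_def x_def] .
    qed (use M1 lnx in auto)
    also have "\<dots> \<le> 2000 * ln (real n) * ln x * M"
    proof -
      have "(194 * M) * (3 * ln x) = 582 * (ln x * M)" by simp
      also have "\<dots> \<le> 2000 * (1/2) * (ln x * M)" using lnx M1 by simp
      also have "\<dots> \<le> 2000 * ln (real n) * (ln x * M)"
        using lnn lnx M1 by (intro mult_right_mono mult_left_mono) auto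
      finally show ?thesis by (simp add: mult.assoc)
    qed
    finally show ?thesis .
  qed
  then show ?thesis unfolding N_def x_def M_def by (simp add: mult.assoc)
qed

theorem proposition4p4:
  shows "\<exists>C>0. \<forall>(n::nat) (V::real) (L::real) (eps::real).
           n \<ge> 2 \<longrightarrow> V > 0 \<longrightarrow> L > 0 \<longrightarrow> eps > 0 \<longrightarrow>
           ln (real (covering_number n n (TV_class n n V L) eps))
             \<le> C * ln (real n) * ln (1 + 2 * L * real n / eps)
                 * max (V\<^sup>2 * ln (real n) / eps\<^sup>2) 1"
  by (intro exI[of _ 2000] conjI allI impI) (auto intro: main_bound)

end
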